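(* Let $\xi_1,\xi_2,\ldots$ be i.i.d.\ nonnegative real random variables with $\overline F(x):=\P(\xi_1\geq x)=x^{-1}\ell(x)$ for $x\to\infty$, where $\ell$ is slowly varying. Let $G(x):=\int_0^x\overline F(t)\,dt$ and $S_k:=\sum_{i=1}^k\xi_i$. Let $(x_n)_{n\geq1}$ be a positive sequence with $\liminf_{n\to\infty}\frac{x_n}{nG(x_n)}>0$ and let $(a_n)_{n\geq1}$ be a positive sequence with $\lim_{n\to\infty}a_n\in(0,\infty)$. Let $(y_n)_{n\geq1}$ be a positive sequence such that, as $n\to\infty$: $y_n\to\infty$, $y_n=o(x_n)$, $ny_n^2\overline F(x_n)\to0$, $\overline F(x_n/y_n)\sim y_n\overline F(x_n)$, and $G(x_n/y_n)\sim G(x_n)$. Let $C>0$ be a constant such that $$\operatorname{Var}\left(\xi_1\mathbf 1_{\{\xi_1<x_n/y_n\}}\right)\leq C\,\frac{x_n^2\overline F(x_n)}{y_n}\quad\text{for all } n\geq1.$$ Then for all $n$ large enough, $$\P(S_k-kG(x_n)\leq -a_nx_n)\leq \frac{4Ck\overline F(x_n)}{a_n^2y_n}\quad\text{for all }1\leq k\leq n.$$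
   Context: A function $\ell$ is slowly varying if $\ell(\lambda x)/\ell(x)\to1$ as $x\to\infty$ for every $\lambda>0$. For sequences, $u_n\sim v_n$ means $u_n/v_n\to1$ as $n\to\infty$. *)

theory Defs
  imports "HOL-Probability.Probability" "HOL-Library.Landau_Symbols"
begin

definition slowly_varying :: "(real \<Rightarrow> real) \<Rightarrow> bool" where
  "slowly_varying l \<longleftrightarrow> (\<forall>c>0. ((\<lambda>x. l (c * x) / l x) \<longlongrightarrow> 1) at_top)"

definition tail_prob :: "'a measure \<Rightarrow> ('a \<Rightarrow> real) \<Rightarrow> real \<Rightarrow> real" where
  "tail_prob M X x = measure M {\<omega> \<in> space M. X \<omega> \<ge> x}"

definition integrated_tail :: "'a measure \<Rightarrow> ('a \<Rightarrow> real) \<Rightarrow> real \<Rightarrow> real" where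
  "integrated_tail M X x = (LBINT t=0..x. tail_prob M X t)"

end

theory Submission imports Defs begin

context prob_space begin

lemma tail_antimono:
  assumes X[measurable]: "X \<in> borel_measurable M" and "t \<le> s"
  shows "tail_prob M X s \<le> tail_prob M X t"
  unfolding tail_prob_def using assms by (intro finite_measure_mono) auto

lemma tail_meas:
  assumes X[measurable]: "X \<in> borel_measurable M"
  shows "tail_prob M X \<in> borel_measurable borel"
proof -
  have "mono (\<lambda>t. - tail_prob M X t)"
    by (auto simp: mono_def intro: tail_antimono[OF X])
  then have "(\<lambda>t. - tail_prob M X t) \<in> borel_measurable borel"
    by (rule borel_measurable_mono)
  then have "(\<lambda>t. - (- tail_prob M X t)) \<in> borel_measurable borel" by measurable
  then show ?thesis by simp
qed

lemma layer_cake: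
  assumes X[measurable]: "X \<in> borel_measurable M" and z: "0 \<le> z"
  shows "integrated_tail M X z = expectation (\<lambda>\<omega>. max 0 (min (X \<omega>) z))"
proof -
  let ?F = "tail_prob M X"
  note Fm[measurable] = tail_meas[OF X]
  have F0: "0 \<le> ?F t" for t unfolding tail_prob_def by simp
  have F1: "?F t \<le> 1" for t unfolding tail_prob_def by simp
  have int1: "integrable lborel (\<lambda>t. indicator {0..z} t * ?F t)"
  proof (rule Bochner_Integration.integrable_bound)
    show "integrable lborel (indicator {0..z} :: real \<Rightarrow> real)"
      by (rule integrable_real_indicator) (auto simp: emeasure_lborel_Icc_eq)
    show "AE t in lborel. norm (indicator {0..z} t * ?F t) \<le> norm (indicator {0..z} t :: real)"
      using F0 F1 by (auto simp: indicator_def)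
  qed measurable
  have eq1: "integrated_tail M X z = (\<integral>t. indicator {0..z} t * ?F t \<partial>lborel)"
    using interval_integral_Icc[OF z, of "tail_prob M X"]
    unfolding integrated_tail_def set_lebesgue_integral_def by (simp add: zero_ereal_def)
  interpret pair_sigma_finite lborel M ..
  have "ennreal (\<integral>t. indicator {0..z} t * ?F t \<partial>lborel)
      = (\<integral>\<^sup>+t. ennreal (indicator {0..z} t * ?F t) \<partial>lborel)"
    by (rule nn_integral_eq_integral[symmetric]) (use int1 F0 in auto)
  also have "\<dots> = (\<integral>\<^sup>+t. \<integral>\<^sup>+\<omega>. indicator {0..z} t * indicator {\<omega>\<in>space M. t \<le> X \<omega>} \<omega> \<partial>M \<partial>lborel)"
  proof (intro nn_integral_cong)
    fix t :: real
    have "ennreal (indicator {0..z} t * ?F t) = indicator {0..z} t * emeasure M {\<omega>\<in>space M. t \<le> X \<omega>}"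
      unfolding tail_prob_def by (simp add: emeasure_eq_measure ennreal_mult' indicator_def)
    also have "\<dots> = indicator {0..z} t * (\<integral>\<^sup>+\<omega>. indicator {\<omega>\<in>space M. t \<le> X \<omega>} \<omega> \<partial>M)"
      by simp
    also have "\<dots> = (\<integral>\<^sup>+\<omega>. indicator {0..z} t * indicator {\<omega>\<in>space M. t \<le> X \<omega>} \<omega> \<partial>M)"
      by (rule nn_integral_cmult[symmetric]) measurable
    finally show "ennreal (indicator {0..z} t * ?F t) = (\<integral>\<^sup>+\<omega>. indicator {0..z} t * indicator {\<omega>\<in>space M. t \<le> X \<omega>} \<omega> \<partial>M)" .
  qed
  also have "\<dots> = (\<integral>\<^sup>+\<omega>. \<integral>\<^sup>+t. indicator {0..z} t * indicator {\<omega>\<in>space M. t \<le> X \<omega>} \<omega> \<partial>lborel \<partial>M)"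
  proof -
    have "(\<lambda>p. indicator {0..z} (fst p) * indicator {\<omega>\<in>space M. fst p \<le> X \<omega>} (snd p) :: ennreal)
       = (\<lambda>p. indicator {p \<in> space (lborel \<Otimes>\<^sub>M M). 0 \<le> fst p \<and> fst p \<le> z \<and> fst p \<le> X (snd p)} p)"
      by (auto simp: indicator_def space_pair_measure fun_eq_iff)
    moreover have "(\<lambda>p. indicator {p \<in> space (lborel \<Otimes>\<^sub>M M). 0 \<le> fst p \<and> fst p \<le> z \<and> fst p \<le> X (snd p)} p :: ennreal) \<in> borel_measurable (lborel \<Otimes>\<^sub>M M)"
      by measurable
    ultimately have meas: "case_prod (\<lambda>t \<omega>. indicator {0..z} t * indicator {\<omega>\<in>space M. t \<le> X \<omega>} \<omega> :: ennreal) \<in> borel_measurable (lborel \<Otimes>\<^sub>M M)"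
      by (simp add: case_prod_beta')
    show ?thesis by (rule Fubini'[OF meas, symmetric])
  qed
  also have "\<dots> = (\<integral>\<^sup>+\<omega>. ennreal (max 0 (min (X \<omega>) z)) \<partial>M)"
  proof (intro nn_integral_cong)
    fix \<omega> assume \<omega>: "\<omega> \<in> space M"
    have "(\<integral>\<^sup>+t. indicator {0..z} t * indicator {\<omega>\<in>space M. t \<le> X \<omega>} \<omega> \<partial>lborel)
        = (\<integral>\<^sup>+t. indicator {0..min z (X \<omega>)} t \<partial>lborel)"
      using \<omega> by (intro nn_integral_cong) (auto simp: indicator_def)
    also have "\<dots> = ennreal (max 0 (min (X \<omega>) z))"
      using z by (simp add: emeasure_lborel_Icc_eq min.commute ennreal_neg min_def)
    finally show "(\<integral>\<^sup>+t. indicator {0..z} t * indicator {\<omega>\<in>space M. t \<le> X \<omega>} \<omega> \<partial>lborel) = ennreal (max 0 (min (X \<omega>) z))" .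
  qed
  also have "\<dots> = ennreal (expectation (\<lambda>\<omega>. max 0 (min (X \<omega>) z)))"
  proof (rule nn_integral_eq_integral)
    show "integrable M (\<lambda>\<omega>. max 0 (min (X \<omega>) z))"
      by (rule integrable_const_bound[where B=z]) (use z in auto)
  qed auto
  finally have "ennreal (\<integral>t. indicator {0..z} t * ?F t \<partial>lborel) = ennreal (expectation (\<lambda>\<omega>. max 0 (min (X \<omega>) z)))" .
  moreover have "0 \<le> (\<integral>t. indicator {0..z} t * ?F t \<partial>lborel)"
    using F0 by (intro integral_nonneg_AE) auto
  moreover have "0 \<le> expectation (\<lambda>\<omega>. max 0 (min (X \<omega>) z))"
    by (intro integral_nonneg_AE) auto
  ultimately show ?thesis using eq1 by simp
qed

end

context prob_space begin

lemma var_sum_indep: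
  fixes Y :: "nat \<Rightarrow> 'a \<Rightarrow> real"
  assumes indep: "indep_vars (\<lambda>_. borel) Y J" and fin: "finite J"
    and bnd: "\<And>i. i \<in> J \<Longrightarrow> AE \<omega> in M. \<bar>Y i \<omega>\<bar> \<le> B"
  shows "expectation (\<lambda>\<omega>. \<Sum>i\<in>J. Y i \<omega>) = (\<Sum>i\<in>J. expectation (Y i))"
    and "variance (\<lambda>\<omega>. \<Sum>i\<in>J. Y i \<omega>) = (\<Sum>i\<in>J. variance (Y i))"
proof -
  have rv[measurable]: "Y i \<in> borel_measurable M" if "i \<in> J" for i
    using indep that unfolding indep_vars_def by auto
  have intY: "integrable M (Y i)" if "i \<in> J" for i
    by (rule integrable_const_bound[where B=B]) (use bnd[OF that] rv[OF that] in auto)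
  show ES: "expectation (\<lambda>\<omega>. \<Sum>i\<in>J. Y i \<omega>) = (\<Sum>i\<in>J. expectation (Y i))"
    by (rule Bochner_Integration.integral_sum) (use intY in auto)
  define Z where "Z i \<omega> = Y i \<omega> - expectation (Y i)" for i \<omega>
  have Zm[measurable]: "Z i \<in> borel_measurable M" if "i \<in> J" for i
    unfolding Z_def using rv[OF that] by measurable
  have intZZ: "integrable M (\<lambda>\<omega>. Z i \<omega> * Z j \<omega>)" if "i \<in> J" "j \<in> J" for i j
  proof (rule integrable_const_bound[where B="(B + \<bar>expectation (Y i)\<bar>) * (B + \<bar>expectation (Y j)\<bar>)"])
    show "AE \<omega> in M. norm (Z i \<omega> * Z j \<omega>) \<le> (B + \<bar>expectation (Y i)\<bar>) * (B + \<bar>expectation (Y j)\<bar>)"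
      using bnd[OF that(1)] bnd[OF that(2)]
    proof eventually_elim
      case (elim \<omega>)
      have a: "\<bar>Z i \<omega>\<bar> \<le> B + \<bar>expectation (Y i)\<bar>" "\<bar>Z j \<omega>\<bar> \<le> B + \<bar>expectation (Y j)\<bar>"
        using elim unfolding Z_def by linarith+
      show ?case unfolding norm_mult real_norm_def abs_mult
        by (rule mult_mono) (use a in auto)
    qed
  qed (use that in measurable)
  have EZ: "expectation (Z i) = 0" if "i \<in> J" for i
    unfolding Z_def using intY[OF that] by (simp add: prob_space)
  have indZ: "indep_vars (\<lambda>_. borel) Z J"
    unfolding Z_def
    by (rule indep_vars_compose2[OF indep, where N="\<lambda>_. borel" and Y="\<lambda>i t. t - expectation (Y i)", simplified])
  have cross: "expectation (\<lambda>\<omega>. Z i \<omega> * Z j \<omega>) = 0" if "i \<in> J" "j \<in> J" "i \<noteq> j" for i j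
  proof -
    have ind2: "indep_vars (\<lambda>_. borel) Z {i, j}"
      by (rule indep_vars_subset[OF indZ]) (use that in auto)
    have intZ: "integrable M (Z l)" if "l \<in> {i,j}" for l
      unfolding Z_def using intY \<open>i \<in> J\<close> \<open>j \<in> J\<close> that by auto
    have "expectation (\<lambda>\<omega>. \<Prod>l\<in>{i,j}. Z l \<omega>) = (\<Prod>l\<in>{i,j}. expectation (Z l))"
      by (rule indep_vars_lebesgue_integral[OF _ ind2 intZ]) auto
    then show ?thesis using that EZ by simp
  qed
  have cen: "(\<lambda>\<omega>. (\<Sum>i\<in>J. Y i \<omega>) - expectation (\<lambda>\<omega>. \<Sum>i\<in>J. Y i \<omega>)) = (\<lambda>\<omega>. \<Sum>i\<in>J. Z i \<omega>)"
    unfolding ES Z_def by (simp add: sum_subtractf)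
  have "variance (\<lambda>\<omega>. \<Sum>i\<in>J. Y i \<omega>) = expectation (\<lambda>\<omega>. (\<Sum>i\<in>J. Z i \<omega>)\<^sup>2)"
    using cen by (metis (no_types))
  also have "\<dots> = expectation (\<lambda>\<omega>. \<Sum>i\<in>J. \<Sum>j\<in>J. Z i \<omega> * Z j \<omega>)"
    by (simp add: power2_eq_square sum_product)
  also have "\<dots> = (\<Sum>i\<in>J. \<Sum>j\<in>J. expectation (\<lambda>\<omega>. Z i \<omega> * Z j \<omega>))"
    using intZZ by (simp add: Bochner_Integration.integral_sum)
  also have "\<dots> = (\<Sum>i\<in>J. expectation (\<lambda>\<omega>. Z i \<omega> * Z i \<omega>))"
  proof (rule sum.cong[OF refl])
    fix i assume i: "i \<in> J"
    have "(\<Sum>j\<in>J. expectation (\<lambda>\<omega>. Z i \<omega> * Z j \<omega>)) = expectation (\<lambda>\<omega>. Z i \<omega> * Z i \<omega>) + (\<Sum>j\<in>J-{i}. expectation (\<lambda>\<omega>. Z i \<omega> * Z j \<omega>))"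
      by (rule sum.remove[OF fin i])
    also have "(\<Sum>j\<in>J-{i}. expectation (\<lambda>\<omega>. Z i \<omega> * Z j \<omega>)) = 0"
      using cross i by (intro sum.neutral) auto
    finally show "(\<Sum>j\<in>J. expectation (\<lambda>\<omega>. Z i \<omega> * Z j \<omega>)) = expectation (\<lambda>\<omega>. Z i \<omega> * Z i \<omega>)" by simp
  qed
  also have "\<dots> = (\<Sum>i\<in>J. variance (Y i))"
    unfolding Z_def by (simp add: power2_eq_square)
  finally show "variance (\<lambda>\<omega>. \<Sum>i\<in>J. Y i \<omega>) = (\<Sum>i\<in>J. variance (Y i))" .
qed

end

context prob_space begin

lemma key_bound:
  fixes \<xi> :: "nat \<Rightarrow> 'a \<Rightarrow> real"
  assumes indep: "indep_vars (\<lambda>_. borel) \<xi> {1..}"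
    and ident: "\<And>i. i \<ge> 1 \<Longrightarrow> distr M borel (\<xi> i) = distr M borel (\<xi> 1)"
    and nonneg: "\<And>i. i \<ge> 1 \<Longrightarrow> AE \<omega> in M. \<xi> i \<omega> \<ge> 0"
    and z: "z > 0" and e: "e > 0" and k: "k \<ge> 1"
    and V: "variance (\<lambda>\<omega>. \<xi> 1 \<omega> * indicator {..<z} (\<xi> 1 \<omega>)) \<le> V"
    and D: "real k * (g - (integrated_tail M (\<xi> 1) z - z * tail_prob M (\<xi> 1) z)) \<le> e/2"
  shows "measure M {\<omega>\<in>space M. (\<Sum>i=1..k. \<xi> i \<omega>) - real k * g \<le> - e} \<le> real k * V / (e/2)\<^sup>2"
proof -
  have rv[measurable]: "\<xi> i \<in> borel_measurable M" if "i \<ge> 1" for i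
    using indep that unfolding indep_vars_def by auto
  have rv1[measurable]: "\<xi> 1 \<in> borel_measurable M" using rv by simp
  define h where "h t = t * indicator {..<z} t" for t :: real
  have hm[measurable]: "h \<in> borel_measurable borel" unfolding h_def by measurable
  define T where "T i \<omega> = h (\<xi> i \<omega>)" for i \<omega>
  have Tm[measurable]: "T i \<in> borel_measurable M" if "i \<ge> 1" for i
    unfolding T_def using rv[OF that] by measurable
  have Tb: "AE \<omega> in M. \<bar>T i \<omega>\<bar> \<le> z" if "i \<ge> 1" for i
    using nonneg[OF that] by eventually_elim (use z in \<open>auto simp: T_def h_def indicator_def\<close>)
  have Tle: "AE \<omega> in M. T i \<omega> \<le> \<xi> i \<omega>" if "i \<ge> 1" for i
    using nonneg[OF that] by eventually_elim (auto simp: T_def h_def indicator_def)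
  have ET: "expectation (T i) = expectation (T 1)" if "i \<ge> 1" for i
  proof -
    have "expectation (T i) = integral\<^sup>L (distr M borel (\<xi> i)) h"
      unfolding T_def by (rule integral_distr[symmetric]) (use that in auto)
    also have "\<dots> = integral\<^sup>L (distr M borel (\<xi> 1)) h" using ident[OF that] by simp
    also have "\<dots> = expectation (T 1)"
      unfolding T_def by (rule integral_distr) auto
    finally show ?thesis .
  qed
  have VT: "variance (T i) = variance (T 1)" if "i \<ge> 1" for i
  proof -
    have "variance (T i) = integral\<^sup>L (distr M borel (\<xi> i)) (\<lambda>t. (h t - expectation (T 1))\<^sup>2)"
      unfolding ET[OF that] unfolding T_def by (rule integral_distr[symmetric]) (use that in auto)
    also have "\<dots> = integral\<^sup>L (distr M borel (\<xi> 1)) (\<lambda>t. (h t - expectation (T 1))\<^sup>2)" using ident[OF that] by simp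
    also have "\<dots> = variance (T 1)"
      unfolding T_def by (rule integral_distr) auto
    finally show ?thesis .
  qed
  have intT1: "integrable M (T 1)"
    by (rule integrable_const_bound[where B=z]) (use Tb[of 1] in auto)
  have mu: "expectation (T 1) = integrated_tail M (\<xi> 1) z - z * tail_prob M (\<xi> 1) z"
  proof -
    have "integrated_tail M (\<xi> 1) z = expectation (\<lambda>\<omega>. max 0 (min (\<xi> 1 \<omega>) z))"
      by (rule layer_cake) (use z in auto)
    also have "\<dots> = expectation (\<lambda>\<omega>. T 1 \<omega> + z * indicator {\<omega>\<in>space M. z \<le> \<xi> 1 \<omega>} \<omega>)"
    proof (rule integral_cong_AE)
      show "AE \<omega> in M. max 0 (min (\<xi> 1 \<omega>) z) = T 1 \<omega> + z * indicator {\<omega>\<in>space M. z \<le> \<xi> 1 \<omega>} \<omega>"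
        using nonneg[of 1, OF order_refl] AE_space
      proof eventually_elim
        case (elim \<omega>)
        then show ?case using z by (auto simp: T_def h_def indicator_def)
      qed
    qed measurable
    also have "\<dots> = expectation (T 1) + z * tail_prob M (\<xi> 1) z"
    proof -
      have sA: "{\<omega>\<in>space M. z \<le> \<xi> 1 \<omega>} \<in> sets M" by measurable
      have iI: "integrable M (\<lambda>\<omega>. z * indicator {\<omega>\<in>space M. z \<le> \<xi> 1 \<omega>} \<omega>)"
        using sA by (intro integrable_mult_right integrable_real_indicator) (auto simp: emeasure_eq_measure)
      have "expectation (\<lambda>\<omega>. T 1 \<omega> + z * indicator {\<omega>\<in>space M. z \<le> \<xi> 1 \<omega>} \<omega>)
          = expectation (T 1) + expectation (\<lambda>\<omega>. z * indicator {\<omega>\<in>space M. z \<le> \<xi> 1 \<omega>} \<omega>)"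
        by (rule Bochner_Integration.integral_add[OF intT1 iI])
      also have "expectation (\<lambda>\<omega>. z * indicator {\<omega>\<in>space M. z \<le> \<xi> 1 \<omega>} \<omega>) = z * tail_prob M (\<xi> 1) z"
        unfolding tail_prob_def using sA by (simp add: Int_absorb2 sets.sets_into_space)
      finally show ?thesis .
    qed
    finally show ?thesis by simp
  qed
  let ?J = "{1..k}"
  have indT: "indep_vars (\<lambda>_. borel) T ?J"
  proof -
    have "indep_vars (\<lambda>_. borel) T {1..}"
      unfolding T_def by (rule indep_vars_compose2[OF indep, where N="\<lambda>_. borel" and Y="\<lambda>i. h"]) auto
    then show ?thesis by (rule indep_vars_subset) auto
  qed
  have bndJ: "\<And>i. i \<in> ?J \<Longrightarrow> AE \<omega> in M. \<bar>T i \<omega>\<bar> \<le> z" using Tb by auto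
  have VS1: "expectation (\<lambda>\<omega>. \<Sum>i\<in>?J. T i \<omega>) = (\<Sum>i\<in>?J. expectation (T i))"
    by (rule var_sum_indep(1)[OF indT]) (use bndJ in auto)
  have VS2: "variance (\<lambda>\<omega>. \<Sum>i\<in>?J. T i \<omega>) = (\<Sum>i\<in>?J. variance (T i))"
    by (rule var_sum_indep(2)[OF indT]) (use bndJ in auto)
  define S' where "S' \<omega> = (\<Sum>i\<in>?J. T i \<omega>)" for \<omega>
  have S'm[measurable]: "S' \<in> borel_measurable M" unfolding S'_def
    by (rule borel_measurable_sum) (rule Tm, simp)
  have ES: "expectation S' = real k * expectation (T 1)"
  proof -
    have "(\<Sum>i\<in>?J. expectation (T i)) = (\<Sum>i\<in>?J. expectation (T 1))"
      by (rule sum.cong[OF refl]) (rule ET, simp)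
    then show ?thesis unfolding S'_def VS1 by simp
  qed
  have VarS: "variance S' = real k * variance (T 1)"
  proof -
    have "(\<Sum>i\<in>?J. variance (T i)) = (\<Sum>i\<in>?J. variance (T 1))"
      by (rule sum.cong[OF refl]) (rule VT, simp)
    then show ?thesis unfolding S'_def VS2 by simp
  qed
  have intS2: "integrable M (\<lambda>\<omega>. (S' \<omega>)\<^sup>2)"
  proof (rule integrable_const_bound[where B="(real k * z)\<^sup>2"])
    have "AE \<omega> in M. \<forall>i\<in>?J. \<bar>T i \<omega>\<bar> \<le> z" by (rule AE_finite_allI) (use bndJ in auto)
    then show "AE \<omega> in M. norm ((S' \<omega>)\<^sup>2) \<le> (real k * z)\<^sup>2"
    proof eventually_elim
      case (elim \<omega>)
      have "\<bar>S' \<omega>\<bar> \<le> (\<Sum>i\<in>?J. \<bar>T i \<omega>\<bar>)" unfolding S'_def by (rule sum_abs)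
      also have "\<dots> \<le> (\<Sum>i\<in>?J. z)" by (rule sum_mono) (use elim in auto)
      finally have "\<bar>S' \<omega>\<bar> \<le> real k * z" by simp
      then have "\<bar>S' \<omega>\<bar>\<^sup>2 \<le> (real k * z)\<^sup>2" by (rule power_mono) simp
      then show ?case by simp
    qed
  qed measurable
  have cheb: "prob {\<omega>\<in>space M. e/2 \<le> \<bar>S' \<omega> - expectation S'\<bar>} \<le> variance S' / (e/2)\<^sup>2"
    by (rule Chebyshev_inequality) (use intS2 e in auto)
  have "measure M {\<omega>\<in>space M. (\<Sum>i=1..k. \<xi> i \<omega>) - real k * g \<le> - e}
      \<le> prob {\<omega>\<in>space M. e/2 \<le> \<bar>S' \<omega> - expectation S'\<bar>}"
  proof (rule finite_measure_mono_AE)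
    have "AE \<omega> in M. \<forall>i\<in>?J. T i \<omega> \<le> \<xi> i \<omega>" by (rule AE_finite_allI) (use Tle in auto)
    then show "AE \<omega>\<in>{\<omega>\<in>space M. (\<Sum>i=1..k. \<xi> i \<omega>) - real k * g \<le> - e} in M. \<omega> \<in> {\<omega>\<in>space M. e/2 \<le> \<bar>S' \<omega> - expectation S'\<bar>}"
    proof eventually_elim
      case (elim \<omega>)
      show ?case
      proof
        assume A: "\<omega> \<in> {\<omega>\<in>space M. (\<Sum>i=1..k. \<xi> i \<omega>) - real k * g \<le> - e}"
        have "S' \<omega> \<le> (\<Sum>i=1..k. \<xi> i \<omega>)" unfolding S'_def by (rule sum_mono) (use elim in auto)
        moreover have "real k * (g - (integrated_tail M (\<xi> 1) z - z * tail_prob M (\<xi> 1) z))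
           = real k * g - real k * (integrated_tail M (\<xi> 1) z - z * tail_prob M (\<xi> 1) z)"
          by (simp only: right_diff_distrib)
        moreover have "(\<Sum>i=1..k. \<xi> i \<omega>) - real k * g \<le> - e" using A by simp
        ultimately have "S' \<omega> - expectation S' \<le> - e/2"
          using D unfolding ES mu by linarith
        then have "e/2 \<le> \<bar>S' \<omega> - expectation S'\<bar>" by linarith
        then show "\<omega> \<in> {\<omega>\<in>space M. e/2 \<le> \<bar>S' \<omega> - expectation S'\<bar>}" using A by blast
      qed
    qed
  qed measurable
  also have "\<dots> \<le> variance S' / (e/2)\<^sup>2" by (rule cheb)
  also have "\<dots> \<le> real k * V / (e/2)\<^sup>2"
  proof -
    have Teq: "T 1 = (\<lambda>\<omega>. \<xi> 1 \<omega> * indicator {..<z} (\<xi> 1 \<omega>))" by (simp add: fun_eq_iff T_def h_def)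
    have VT1: "variance (T 1) \<le> V" using V unfolding Teq .
    show ?thesis unfolding VarS by (rule divide_right_mono) (use VT1 in \<open>auto intro: mult_left_mono\<close>)
  qed
  finally show ?thesis .
qed

end

lemma arith_eq_aux:
  fixes x a y C F :: real
  assumes "x > 0" "a > 0" "y > 0"
  shows "real k * (C * x\<^sup>2 * F / y) / (a * x / 2)\<^sup>2 = 4 * C * real k * F / (a\<^sup>2 * y)"
  using assms by (simp add: field_simps power2_eq_square)

theorem corollary2:
  fixes M :: "'a measure" and \<xi> :: "nat \<Rightarrow> 'a \<Rightarrow> real"
    and x a y :: "nat \<Rightarrow> real" and C :: real
  assumes "prob_space M"
    and indep: "prob_space.indep_vars M (\<lambda>_. borel) \<xi> {1..}"
    and ident: "\<And>i. i \<ge> 1 \<Longrightarrow> distr M borel (\<xi> i) = distr M borel (\<xi> 1)"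
    and nonneg: "\<And>i. i \<ge> 1 \<Longrightarrow> AE \<omega> in M. \<xi> i \<omega> \<ge> 0"
    and regvar: "\<exists>l. slowly_varying l \<and>
                   (\<forall>\<^sub>F t in at_top. tail_prob M (\<xi> 1) t = l t / t)"
    and x_pos: "\<And>n. n \<ge> 1 \<Longrightarrow> x n > 0"
    and x_liminf: "liminf (\<lambda>n. ereal (x n / (real n * integrated_tail M (\<xi> 1) (x n)))) > 0"
    and a_pos: "\<And>n. n \<ge> 1 \<Longrightarrow> a n > 0"
    and a_lim: "\<exists>L>0. a \<longlonglongrightarrow> L"
    and y_pos: "\<And>n. n \<ge> 1 \<Longrightarrow> y n > 0"
    and y_inf: "filterlim y at_top sequentially"
    and y_o: "y \<in> o(x)"
    and y_sq: "(\<lambda>n. real n * (y n)\<^sup>2 * tail_prob M (\<xi> 1) (x n)) \<longlonglongrightarrow> 0"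
    and F_equiv: "(\<lambda>n. tail_prob M (\<xi> 1) (x n / y n))
                    \<sim>[sequentially] (\<lambda>n. y n * tail_prob M (\<xi> 1) (x n))"
    and G_equiv: "(\<lambda>n. integrated_tail M (\<xi> 1) (x n / y n))
                    \<sim>[sequentially] (\<lambda>n. integrated_tail M (\<xi> 1) (x n))"
    and C_pos: "C > 0"
    and var_bound: "\<And>n. n \<ge> 1 \<Longrightarrow>
        prob_space.variance M (\<lambda>\<omega>. \<xi> 1 \<omega> * indicator {..< x n / y n} (\<xi> 1 \<omega>))
          \<le> C * (x n)\<^sup>2 * tail_prob M (\<xi> 1) (x n) / y n"
  shows "\<forall>\<^sub>F n in sequentially. \<forall>k\<in>{1..n}.
           measure M {\<omega> \<in> space M.
              (\<Sum>i=1..k. \<xi> i \<omega>) - real k * integrated_tail M (\<xi> 1) (x n) \<le> - a n * x n}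
           \<le> 4 * C * real k * tail_prob M (\<xi> 1) (x n) / ((a n)\<^sup>2 * y n)"
proof -
  interpret P: prob_space M by fact
  define F where "F = tail_prob M (\<xi> 1)"
  define G where "G = integrated_tail M (\<xi> 1)"
  have F0: "0 \<le> F t" for t unfolding F_def tail_prob_def by simp
  obtain L where L: "L > 0" "a \<longlonglongrightarrow> L" using a_lim by blast
  obtain c :: real where c: "0 < c" "ereal c < liminf (\<lambda>n. ereal (x n / (real n * G (x n))))"
  proof -
    from ereal_dense2[OF x_liminf[folded G_def]] obtain c where "0 < ereal c" "ereal c < liminf (\<lambda>n. ereal (x n / (real n * G (x n))))"
      by blast
    then show ?thesis using that by auto
  qed
  define \<epsilon> where "\<epsilon> = c * L / 8"
  define \<delta> where "\<delta> = L / 16"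
  have \<epsilon>: "\<epsilon> > 0" unfolding \<epsilon>_def using c L by simp
  have \<delta>: "\<delta> > 0" unfolding \<delta>_def using L by simp
  have ev_c: "\<forall>\<^sub>F n in sequentially. c < x n / (real n * G (x n))"
    using less_LiminfD[OF c(2)] by simp
  have ev_y: "\<forall>\<^sub>F n in sequentially. 1 \<le> y n"
    using y_inf unfolding filterlim_at_top by blast
  have ev_a: "\<forall>\<^sub>F n in sequentially. L/2 < a n"
    by (rule order_tendstoD(1)[OF L(2)]) (use L in simp)
  have ev_G: "\<forall>\<^sub>F n in sequentially. norm (G (x n / y n) - G (x n)) \<le> \<epsilon> * norm (G (x n))"
    using landau_o.smallD[OF asymp_equiv_imp_diff_smallo[OF G_equiv[folded G_def]] \<epsilon>] .
  have ev_F: "\<forall>\<^sub>F n in sequentially. norm (F (x n / y n) - y n * F (x n)) \<le> 1 * norm (y n * F (x n))"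
    using landau_o.smallD[OF asymp_equiv_imp_diff_smallo[OF F_equiv[folded F_def]], of 1] by simp
  have ev_sq: "\<forall>\<^sub>F n in sequentially. real n * (y n)\<^sup>2 * F (x n) < \<delta>"
    by (rule order_tendstoD(2)[OF y_sq[folded F_def] \<delta>])
  have ev_n: "\<forall>\<^sub>F n in sequentially. 1 \<le> n" by (rule eventually_ge_at_top)
  show ?thesis
    using ev_c ev_y ev_a ev_G ev_F ev_sq ev_n
  proof eventually_elim
    case (elim n)
    note n = elim
    have xp: "x n > 0" using x_pos n(7) by simp
    have ap: "a n > 0" using a_pos n(7) by simp
    have yp: "y n > 0" using y_pos n(7) by simp
    define z where "z = x n / y n"
    have zp: "z > 0" unfolding z_def using xp yp by simp
    define \<mu> where "\<mu> = G z - z * F z"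
    have nG: "real n * G (x n) > 0"
    proof (rule ccontr)
      assume "\<not> real n * G (x n) > 0"
      then have "x n / (real n * G (x n)) \<le> 0"
        using divide_nonneg_nonpos[of "x n" "real n * G (x n)"] xp by linarith
      then show False using n(1) c(1) by linarith
    qed
    have Gx: "G (x n) > 0" using nG by (simp add: zero_less_mult_iff)
    have ncG: "c * (real n * G (x n)) < x n"
      using n(1) nG by (simp add: field_simps)
    have bound1: "real n * (G (x n) - G z) \<le> L * x n / 8"
    proof -
      have "G (x n) - G z \<le> \<epsilon> * G (x n)" using n(4) Gx unfolding z_def by simp
      then have "real n * (G (x n) - G z) \<le> real n * (\<epsilon> * G (x n))"
        by (rule mult_left_mono) simp
      also have "\<dots> = (L / 8) * (c * (real n * G (x n)))" unfolding \<epsilon>_def by (simp add: field_simps)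
      also have "\<dots> \<le> (L / 8) * x n"
        using ncG L by (intro mult_left_mono) auto
      finally show ?thesis by simp
    qed
    have bound2: "real n * (z * F z) \<le> L * x n / 8"
    proof -
      have Fz: "F z \<le> 2 * y n * F (x n)"
      proof -
        have "\<bar>F z - y n * F (x n)\<bar> \<le> y n * F (x n)"
        proof -
          have nn: "\<bar>y n * F (x n)\<bar> = y n * F (x n)"
            by (rule abs_of_nonneg, rule mult_nonneg_nonneg) (use yp F0[of "x n"] in linarith)+
          have "norm (F z - y n * F (x n)) \<le> 1 * norm (y n * F (x n))" using n(5) unfolding z_def .
          then have "\<bar>F z - y n * F (x n)\<bar> \<le> \<bar>y n * F (x n)\<bar>" unfolding real_norm_def mult_1 .
          then show ?thesis using nn by linarith
        qed
        then show ?thesis by linarith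
      qed
      have y2: "1 \<le> (y n)\<^sup>2" using n(2) by (simp add: one_le_power)
      have nF: "real n * F (x n) \<le> \<delta>"
      proof -
        have "real n * F (x n) = real n * F (x n) * 1" by simp
        also have "\<dots> \<le> real n * F (x n) * (y n)\<^sup>2"
          by (rule mult_left_mono[OF y2]) (use F0 in simp)
        also have "\<dots> < \<delta>" using n(6) by (simp add: algebra_simps)
        finally show ?thesis by simp
      qed
      have "real n * (z * F z) \<le> real n * (z * (2 * y n * F (x n)))"
        using Fz zp by (intro mult_left_mono) auto
      also have "\<dots> = 2 * x n * (real n * F (x n))" unfolding z_def using yp by simp
      also have "\<dots> \<le> 2 * x n * \<delta>" using nF xp by (intro mult_left_mono) auto
      finally show ?thesis unfolding \<delta>_def by simp
    qed
    have Dn: "real n * (G (x n) - \<mu>) \<le> a n * x n / 2"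
    proof -
      have "real n * (G (x n) - \<mu>) = real n * (G (x n) - G z) + real n * (z * F z)"
        unfolding \<mu>_def by (simp only: right_diff_distrib)
      also have "\<dots> \<le> L * x n / 4" using bound1 bound2 by simp
      also have "\<dots> \<le> a n * x n / 2"
      proof -
        have "(L / 2) * x n \<le> a n * x n" using n(3) xp by (intro mult_right_mono) auto
        then show ?thesis by linarith
      qed
      finally show ?thesis .
    qed
    show ?case
    proof
      fix k assume k: "k \<in> {1..n}"
      have Dk: "real k * (G (x n) - \<mu>) \<le> a n * x n / 2"
      proof (cases "G (x n) - \<mu> \<ge> 0")
        case True
        then have "real k * (G (x n) - \<mu>) \<le> real n * (G (x n) - \<mu>)"
          using k by (intro mult_right_mono) auto
        then show ?thesis using Dn by linarith
      next
        case False
        then have "real k * (G (x n) - \<mu>) \<le> 0" by (simp add: mult_nonneg_nonpos)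
        moreover have "0 < a n * x n" using ap xp by simp
        ultimately show ?thesis by linarith
      qed
      have kb: "measure M {\<omega>\<in>space M. (\<Sum>i=1..k. \<xi> i \<omega>) - real k * G (x n) \<le> - (a n * x n)}
          \<le> real k * (C * (x n)\<^sup>2 * F (x n) / y n) / (a n * x n / 2)\<^sup>2"
      proof (rule P.key_bound[OF indep ident nonneg zp])
        show "0 < a n * x n" using ap xp by simp
        show "1 \<le> k" using k by simp
        show "P.variance (\<lambda>\<omega>. \<xi> 1 \<omega> * indicator {..<z} (\<xi> 1 \<omega>)) \<le> C * (x n)\<^sup>2 * F (x n) / y n"
          using var_bound[OF n(7)] unfolding z_def F_def .
        show "real k * (G (x n) - (integrated_tail M (\<xi> 1) z - z * tail_prob M (\<xi> 1) z)) \<le> a n * x n / 2"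
          using Dk unfolding \<mu>_def G_def F_def .
      qed auto
      have eq: "real k * (C * (x n)\<^sup>2 * F (x n) / y n) / (a n * x n / 2)\<^sup>2
          = 4 * C * real k * F (x n) / ((a n)\<^sup>2 * y n)"
        by (rule arith_eq_aux[OF xp ap yp])
      show "measure M {\<omega> \<in> space M.
              (\<Sum>i=1..k. \<xi> i \<omega>) - real k * integrated_tail M (\<xi> 1) (x n) \<le> - a n * x n}
           \<le> 4 * C * real k * tail_prob M (\<xi> 1) (x n) / ((a n)\<^sup>2 * y n)"
        using kb[unfolded eq] by (simp only: G_def F_def mult_minus_left)
    qed
  qed
qed

end
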